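(* Let $B$ be a Banach left $A$-module and suppose there is a bounded net $(e''_\alpha)_\alpha\subseteq A^{**}$ such that $\pi_\ell^{***}(e''_\alpha,b'')\to b''$ in norm for every $b''\in B^{**}$. Then there exists $e''\in A^{**}$ with $\pi_\ell^{***}(e'',b'')=b''$ for all $b''\in B^{**}$.
   Context: $A$ is a Banach algebra and $B$ a Banach left $A$-module with action $\pi_\ell:A\times B\to B$. For a bounded bilinear $m:X\times Y\to Z$: $m^*:Z^*\times X\to Y^*$, $\langle m^*(z',x),y\rangle=\langle z',m(x,y)\rangle$; $m^{**}:Y^{**}\times Z^*\to X^*$, $\langle m^{**}(y'',z'),x\rangle=\langle y'',m^*(z',x)\rangle$; $m^{***}:X^{**}\times Y^{**}\to Z^{**}$, $\langle m^{***}(x'',y''),z'\rangle=\langle x'',m^{**}(y'',z')\rangle$. *)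

theory Defs
  imports "HOL-Analysis.Analysis"
begin

type_synonym 'a dual = "'a \<Rightarrow>\<^sub>L real"

definition adj1 :: "('x \<Rightarrow> 'y::real_normed_vector \<Rightarrow> 'z::real_normed_vector)
    \<Rightarrow> 'z dual \<Rightarrow> 'x \<Rightarrow> 'y dual" where
  "adj1 m z' x = Blinfun (\<lambda>y. blinfun_apply z' (m x y))"

definition adj2 :: "('x::real_normed_vector \<Rightarrow> 'y::real_normed_vector \<Rightarrow> 'z::real_normed_vector)
    \<Rightarrow> 'y dual dual \<Rightarrow> 'z dual \<Rightarrow> 'x dual" where
  "adj2 m y'' z' = Blinfun (\<lambda>x. blinfun_apply y'' (adj1 m z' x))"

definition adj3 :: "('x::real_normed_vector \<Rightarrow> 'y::real_normed_vector \<Rightarrow> 'z::real_normed_vector)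
    \<Rightarrow> 'x dual dual \<Rightarrow> 'y dual dual \<Rightarrow> 'z dual dual" where
  "adj3 m x'' y'' = Blinfun (\<lambda>z'. blinfun_apply x'' (adj2 m y'' z'))"

definition banach_left_module ::
  "('a::{real_normed_algebra,banach} \<Rightarrow> 'b::banach \<Rightarrow> 'b) \<Rightarrow> bool" where
  "banach_left_module \<pi> \<longleftrightarrow> bounded_bilinear \<pi> \<and>
     (\<forall>a c b. \<pi> (a * c) b = \<pi> a (\<pi> c b))"

end

theory Submission
  imports Defs
begin

lemma adj1_apply:
  assumes "bounded_bilinear m"
  shows "blinfun_apply (adj1 m z' x) = (\<lambda>y. blinfun_apply z' (m x y))"
  unfolding adj1_def
  by (rule bounded_linear_Blinfun_apply,
      rule bounded_linear_compose[OF blinfun.bounded_linear_right bounded_bilinear.bounded_linear_right[OF assms]])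

lemma adj1_bl:
  assumes m: "bounded_bilinear m"
  shows "bounded_linear (\<lambda>x. adj1 m z' x)"
proof -
  obtain K where K: "K \<ge> 0" "\<And>x y. norm (m x y) \<le> norm x * norm y * K"
    using bounded_bilinear.nonneg_bounded[OF m] by blast
  show ?thesis
  proof (rule bounded_linear_intro[where K="norm z' * K"])
    fix x y show "adj1 m z' (x + y) = adj1 m z' x + adj1 m z' y"
      by (rule blinfun_eqI) (simp add: adj1_apply[OF m] bounded_bilinear.add_left[OF m] blinfun.add_right plus_blinfun.rep_eq)
  next
    fix r x show "adj1 m z' (r *\<^sub>R x) = r *\<^sub>R adj1 m z' x"
      by (rule blinfun_eqI) (simp add: adj1_apply[OF m] bounded_bilinear.scaleR_left[OF m] blinfun.scaleR_right scaleR_blinfun.rep_eq)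
  next
    fix x show "norm (adj1 m z' x) \<le> norm x * (norm z' * K)"
    proof (rule norm_blinfun_bound)
      show "0 \<le> norm x * (norm z' * K)" using K by simp
      fix y
      have "norm (blinfun_apply z' (m x y)) \<le> norm z' * norm (m x y)" by (rule norm_blinfun)
      also have "\<dots> \<le> norm z' * (norm x * norm y * K)" using K by (simp add: mult_left_mono)
      finally show "norm (blinfun_apply (adj1 m z' x) y) \<le> norm x * (norm z' * K) * norm y"
        by (simp add: adj1_apply[OF m] algebra_simps)
    qed
  qed
qed

lemma adj2_apply:
  assumes "bounded_bilinear m"
  shows "blinfun_apply (adj2 m y'' z') = (\<lambda>x. blinfun_apply y'' (adj1 m z' x))"
  unfolding adj2_def
  by (rule bounded_linear_Blinfun_apply,
      rule bounded_linear_compose[OF blinfun.bounded_linear_right adj1_bl[OF assms]])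

lemma adj2_bl:
  assumes m: "bounded_bilinear m"
  shows "bounded_linear (\<lambda>z'. adj2 m y'' z')"
proof -
  obtain K where K: "K \<ge> 0" "\<And>x y. norm (m x y) \<le> norm x * norm y * K"
    using bounded_bilinear.nonneg_bounded[OF m] by blast
  have a1add: "adj1 m (z1 + z2) x = adj1 m z1 x + adj1 m z2 x" for z1 z2 x
    by (rule blinfun_eqI) (simp add: adj1_apply[OF m] blinfun.add_left plus_blinfun.rep_eq)
  have a1sc: "adj1 m (r *\<^sub>R z) x = r *\<^sub>R adj1 m z x" for r z x
    by (rule blinfun_eqI) (simp add: adj1_apply[OF m] scaleR_blinfun.rep_eq)
  show ?thesis
  proof (rule bounded_linear_intro[where K="norm y'' * K"])
    fix x y show "adj2 m y'' (x + y) = adj2 m y'' x + adj2 m y'' y"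
      by (rule blinfun_eqI) (simp add: adj2_apply[OF m] a1add blinfun.add_right plus_blinfun.rep_eq)
  next
    fix r x show "adj2 m y'' (r *\<^sub>R x) = r *\<^sub>R adj2 m y'' x"
      by (rule blinfun_eqI) (simp add: adj2_apply[OF m] a1sc blinfun.scaleR_right scaleR_blinfun.rep_eq)
  next
    fix z show "norm (adj2 m y'' z) \<le> norm z * (norm y'' * K)"
    proof (rule norm_blinfun_bound)
      show "0 \<le> norm z * (norm y'' * K)" using K by simp
      fix x
      have "norm (adj1 m z x) \<le> norm z * norm x * K"
      proof (rule norm_blinfun_bound)
        show "0 \<le> norm z * norm x * K" using K by simp
        fix y
        have "norm (blinfun_apply z (m x y)) \<le> norm z * norm (m x y)" by (rule norm_blinfun)
        also have "\<dots> \<le> norm z * (norm x * norm y * K)" using K by (simp add: mult_left_mono)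
        finally show "norm (blinfun_apply (adj1 m z x) y) \<le> norm z * norm x * K * norm y"
          by (simp add: adj1_apply[OF m] algebra_simps)
      qed
      have "norm (blinfun_apply y'' (adj1 m z x)) \<le> norm y'' * norm (adj1 m z x)" by (rule norm_blinfun)
      also have "\<dots> \<le> norm y'' * (norm z * norm x * K)" using \<open>norm (adj1 m z x) \<le> _\<close>
        by (simp add: mult_left_mono)
      finally show "norm (blinfun_apply (adj2 m y'' z) x) \<le> norm z * (norm y'' * K) * norm x"
        by (simp add: adj2_apply[OF m] algebra_simps)
    qed
  qed
qed

lemma adj3_apply:
  assumes "bounded_bilinear m"
  shows "blinfun_apply (adj3 m x'' y'') = (\<lambda>z'. blinfun_apply x'' (adj2 m y'' z'))"
  unfolding adj3_def
  by (rule bounded_linear_Blinfun_apply,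
      rule bounded_linear_compose[OF blinfun.bounded_linear_right adj2_bl[OF assms]])

lemma cluster_closed:
  assumes "inf (nhds f) G \<noteq> bot" "closed C" "eventually (\<lambda>g. g \<in> C) G"
  shows "f \<in> C"
proof (rule ccontr)
  assume "f \<notin> C"
  then have "eventually (\<lambda>g. g \<in> - C) (nhds f)"
    using assms(2) by (intro eventually_nhds_in_open) auto
  then have "eventually (\<lambda>_. False) (inf (nhds f) G)"
    using assms(3) unfolding eventually_inf by blast
  then show False using assms(1) by (simp add: eventually_False)
qed


theorem mainTheorem15:
  fixes \<pi> :: "'a::{real_normed_algebra,banach} \<Rightarrow> 'b::banach \<Rightarrow> 'b"
    and e :: "'i \<Rightarrow> 'a dual dual"
    and F :: "'i filter"
  assumes "banach_left_module \<pi>"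
    and "F \<noteq> bot"
    and "bounded (range e)"
    and "\<forall>b''. ((\<lambda>i. adj3 \<pi> (e i) b'') \<longlongrightarrow> b'') F"
  shows "\<exists>e''. \<forall>b''. adj3 \<pi> e'' b'' = b''"
proof -
  have m: "bounded_bilinear \<pi>" using assms(1) unfolding banach_left_module_def by blast
  obtain M where M: "\<And>i. norm (e i) \<le> M" using assms(3) unfolding bounded_iff by blast
  define S where "S = {g :: 'a dual \<Rightarrow> real. \<forall>x. \<bar>g x\<bar> \<le> M * norm x}"
  have SP: "S = PiE UNIV (\<lambda>x. cball 0 (M * norm x))"
    unfolding S_def by (auto simp: PiE_iff)
  have "compactin (product_topology (\<lambda>_. euclidean) UNIV) S"
    unfolding SP by (subst compactin_PiE) auto
  hence cS: "compact S" by (simp add: euclidean_product_topology)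
  define G where "G = filtermap (\<lambda>i. blinfun_apply (e i)) F"
  have Gbot: "G \<noteq> bot" using assms(2) by (simp add: G_def filtermap_bot_iff)
  have bd: "\<bar>blinfun_apply (e i) x\<bar> \<le> M * norm x" for i x
  proof -
    have "norm (blinfun_apply (e i) x) \<le> norm (e i) * norm x" by (rule norm_blinfun)
    also have "\<dots> \<le> M * norm x" using M by (simp add: mult_right_mono)
    finally show ?thesis by simp
  qed
  have evS: "eventually (\<lambda>g. g \<in> S) G"
    unfolding G_def eventually_filtermap S_def using bd by simp
  obtain f where fS: "f \<in> S" and cl: "inf (nhds f) G \<noteq> bot"
    using cS Gbot evS unfolding compact_filter by blast
  have cc: "continuous_on UNIV (\<lambda>g::'a dual \<Rightarrow> real. g p)" for p by simp
  have add: "f (x + y) = f x + f y" for x y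
  proof -
    have "closed {g::'a dual \<Rightarrow> real. g (x + y) = g x + g y}"
      by (intro closed_Collect_eq continuous_intros cc)
    moreover have "eventually (\<lambda>g. g \<in> {g. g (x + y) = g x + g y}) G"
      unfolding G_def eventually_filtermap by (simp add: blinfun.add_right)
    ultimately show ?thesis using cluster_closed[OF cl] by blast
  qed
  have sc: "f (r *\<^sub>R x) = r *\<^sub>R f x" for r x
  proof -
    have "closed {g::'a dual \<Rightarrow> real. g (r *\<^sub>R x) = r *\<^sub>R g x}"
      by (intro closed_Collect_eq continuous_intros cc)
    moreover have "eventually (\<lambda>g. g \<in> {g. g (r *\<^sub>R x) = r *\<^sub>R g x}) G"
      unfolding G_def eventually_filtermap by (simp add: blinfun.scaleR_right)
    ultimately show ?thesis using cluster_closed[OF cl] by blast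
  qed
  have bl: "bounded_linear f"
    by (rule bounded_linear_intro[where K=M]) (use add sc fS in \<open>auto simp: S_def mult.commute\<close>)
  define e'' where "e'' = Blinfun f"
  have e''f: "blinfun_apply e'' = f" unfolding e''_def using bl by (rule bounded_linear_Blinfun_apply)
  show ?thesis
  proof (intro exI allI)
    fix b''
    show "adj3 \<pi> e'' b'' = b''"
    proof (rule blinfun_eqI)
      fix z'
      define p where "p = adj2 \<pi> b'' z'"
      define c where "c = blinfun_apply b'' z'"
      have lim: "((\<lambda>i. blinfun_apply (e i) p) \<longlongrightarrow> c) F"
      proof -
        have "((\<lambda>i. blinfun_apply (adj3 \<pi> (e i) b'') z') \<longlongrightarrow> blinfun_apply b'' z') F"
          using assms(4) by (intro blinfun.tendsto tendsto_const) auto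
        thus ?thesis by (simp add: adj3_apply[OF m] p_def c_def)
      qed
      have "\<bar>f p - c\<bar> \<le> \<epsilon>" if "\<epsilon> > 0" for \<epsilon>
      proof -
        have "closed {g::'a dual \<Rightarrow> real. \<bar>g p - c\<bar> \<le> \<epsilon>}"
          by (intro closed_Collect_le continuous_intros cc)
        moreover have "eventually (\<lambda>i. dist (blinfun_apply (e i) p) c < \<epsilon>) F"
          using lim that by (rule tendstoD)
        hence "eventually (\<lambda>g. g \<in> {g. \<bar>g p - c\<bar> \<le> \<epsilon>}) G"
          unfolding G_def eventually_filtermap
          by (rule eventually_mono) (simp add: dist_real_def)
        ultimately show ?thesis using cluster_closed[OF cl] by blast
      qed
      hence "f p = c"
        by (metis abs_le_zero_iff dense_ge linorder_not_le abs_ge_zero order.strict_iff_order eq_iff_diff_eq_0)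
      thus "blinfun_apply (adj3 \<pi> e'' b'') z' = blinfun_apply b'' z'"
        by (simp add: adj3_apply[OF m] e''f p_def c_def)
    qed
  qed
qed

end
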